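(* Let $f:(0,\infty)\to(0,\infty)$ be continuous with $f\in\mathrm{RV}_0(\beta)$ for some $\beta>1$, let $F(x)=\int_x^1\frac{du}{f(u)}$ and $F^{-1}$ its inverse. Let $\varphi:(0,\infty)\to(0,\infty)$ be continuous and strictly increasing with $\varphi(x)\to0$ as $x\to0^+$ and $\lim_{x\to0^+}f(x)/\varphi(x)=1$. Let $\theta>0$ and let $\gamma:(0,\infty)\to(0,\infty)$ be continuous, strictly decreasing, with $\gamma\in\mathrm{RV}_\infty(-\theta)$ and $\gamma(t)\to0$ as $t\to\infty$. If \[ \lim_{t\to\infty}\frac{f(F^{-1}(t))}{\gamma(t)}=0, \] then \[ \lim_{t\to\infty}\frac{\varphi^{-1}(\gamma(t))}{t\,\gamma(t)}=0. \]
   Context: $\mathrm{RV}_0(\beta)$: measurable positive $\varphi$ on $(0,\infty)$ with $\varphi(\lambda x)/\varphi(x)\to\lambda^\beta$ as $x\to0^+$ for every $\lambda>0$. $\mathrm{RV}_\infty(\alpha)$: measurable positive $h$ with $h(\lambda t)/h(t)\to\lambda^\alpha$ as $t\to\infty$ for every $\lambda>0$. *)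

theory Defs
  imports "HOL-Analysis.Analysis"
begin

definition RV_zero :: "real \<Rightarrow> (real \<Rightarrow> real) \<Rightarrow> bool" where
  "RV_zero \<beta> \<phi> \<longleftrightarrow>
     set_borel_measurable borel {0<..} \<phi> \<and> (\<forall>x>0. \<phi> x > 0) \<and>
     (\<forall>l>0. ((\<lambda>x. \<phi> (l * x) / \<phi> x) \<longlongrightarrow> l powr \<beta>) (at_right 0))"

definition RV_inf :: "real \<Rightarrow> (real \<Rightarrow> real) \<Rightarrow> bool" where
  "RV_inf \<alpha> h \<longleftrightarrow>
     set_borel_measurable borel {0<..} h \<and> (\<forall>t>0. h t > 0) \<and>
     (\<forall>l>0. ((\<lambda>t. h (l * t) / h t) \<longlongrightarrow> l powr \<alpha>) at_top)"

end

theory Submission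
  imports Defs
begin


lemma int_lb:
  fixes f :: "real \<Rightarrow> real"
  assumes fc: "continuous_on {0<..} f" and fp: "\<forall>x>0. f x > 0"
    and a: "0 < a" "a \<le> b" "M > 0" and bnd: "\<forall>v\<in>{a..b}. f v \<le> M"
  shows "integral {a..b} (\<lambda>u. 1 / f u) \<ge> (b - a) / M"
proof -
  have "continuous_on {a..b} (\<lambda>u. 1 / f u)"
  proof (rule continuous_on_divide)
    show "continuous_on {a..b} f" using a by (intro continuous_on_subset[OF fc]) auto
    show "\<forall>u\<in>{a..b}. f u \<noteq> 0"
    proof
      fix u assume "u \<in> {a..b}" hence "u > 0" using a by auto
      thus "f u \<noteq> 0" using fp by (metis less_irrefl)
    qed
  qed auto
  hence gi: "(\<lambda>u. 1 / f u) integrable_on {a..b}" by (rule integrable_continuous_real)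
  have "integral {a..b} (\<lambda>u. 1 / M) \<le> integral {a..b} (\<lambda>u. 1 / f u)"
  proof (rule integral_le[OF _ gi])
    show "(\<lambda>u. 1 / M) integrable_on {a..b}" by (rule integrable_const_ivl)
    fix v assume v: "v \<in> {a..b}"
    hence "f v > 0" using fp a by auto
    thus "1 / M \<le> 1 / f v" using bnd v by (simp add: frac_le)
  qed
  thus ?thesis using a by simp
qed

lemma F_facts:
  fixes f :: "real \<Rightarrow> real"
  assumes fc: "continuous_on {0<..} f" and fp: "\<forall>x>0. f x > 0"
    and F_def: "F = (\<lambda>x::real. LBINT u=x..1. 1 / f u)"
  shows "\<And>x. 0 < x \<Longrightarrow> x \<le> 1 \<Longrightarrow> F x = integral {x..1} (\<lambda>u. 1 / f u)"
    and "\<And>x. 1 \<le> x \<Longrightarrow> F x \<le> 0"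
    and "\<And>x y. 0 < x \<Longrightarrow> x \<le> y \<Longrightarrow> y \<le> 1 \<Longrightarrow> F x = integral {x..y} (\<lambda>u. 1 / f u) + F y"
    and "\<And>x y. 0 < x \<Longrightarrow> x \<le> y \<Longrightarrow> y \<le> 1 \<Longrightarrow> F x \<ge> integral {x..y} (\<lambda>u. 1 / f u)"
    and "\<And>x y. 0 < x \<Longrightarrow> x \<le> y \<Longrightarrow> y \<le> 1 \<Longrightarrow> F x \<ge> F y"
    and "\<And>a. 0 < a \<Longrightarrow> a \<le> 1 \<Longrightarrow> continuous_on {a..1} F"
proof -
  define g where "g = (\<lambda>u. 1 / f u)"
  have gc: "continuous_on {a..b} g" if a: "0 < a" for a b :: real
    unfolding g_def
  proof (rule continuous_on_divide)
    show "continuous_on {a..b} f" using a by (intro continuous_on_subset[OF fc]) auto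
    show "\<forall>u\<in>{a..b}. f u \<noteq> 0"
    proof
      fix u assume "u \<in> {a..b}" hence "u > 0" using a by auto
      thus "f u \<noteq> 0" using fp by (metis less_irrefl)
    qed
  qed auto
  have gpos: "\<And>u. u > 0 \<Longrightarrow> g u > 0" using fp by (simp add: g_def)
  have gi: "\<And>a b. 0 < a \<Longrightarrow> g integrable_on {a..b}" using gc integrable_continuous_real by blast
  have gnn: "\<And>a b. 0 < a \<Longrightarrow> integral {a..b} g \<ge> 0"
    by (rule integral_nonneg[OF gi]) (auto intro!: less_imp_le gpos)
  show Feq: "\<And>x. 0 < x \<Longrightarrow> x \<le> 1 \<Longrightarrow> F x = integral {x..1} (\<lambda>u. 1 / f u)"
  proof -
    fix x :: real assume x: "0 < x" "x \<le> 1"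
    have "F x = (LBINT u=ereal x..ereal 1. g u)" by (simp add: F_def g_def one_ereal_def)
    also have "\<dots> = integral {x..1} g"
      by (rule interval_integral_eq_integral) (use x in \<open>auto intro: borel_integrable_atLeastAtMost' gc\<close>)
    finally show "F x = integral {x..1} (\<lambda>u. 1 / f u)" by (simp add: g_def)
  qed
  show "\<And>x. 1 \<le> x \<Longrightarrow> F x \<le> 0"
  proof -
    fix x :: real assume x: "1 \<le> x"
    have e1: "F x = - (LBINT u=ereal 1..ereal x. g u)" unfolding F_def g_def one_ereal_def
      by (rule interval_integral_endpoints_reverse)
    have e2: "(LBINT u=ereal 1..ereal x. g u) = integral {1..x} g"
      by (rule interval_integral_eq_integral) (use x in \<open>auto intro!: borel_integrable_atLeastAtMost' gc\<close>)
    show "F x \<le> 0" using gnn[of 1 x] e1 e2 by simp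
  qed
  show split: "\<And>x y. 0 < x \<Longrightarrow> x \<le> y \<Longrightarrow> y \<le> 1 \<Longrightarrow> F x = integral {x..y} (\<lambda>u. 1 / f u) + F y"
  proof -
    fix x y :: real assume xy: "0 < x" "x \<le> y" "y \<le> 1"
    show "F x = integral {x..y} (\<lambda>u. 1 / f u) + F y"
      using Feq[of x] Feq[of y] xy Henstock_Kurzweil_Integration.integral_combine[OF xy(2,3) gi[OF xy(1), of 1]]
      unfolding g_def by simp
  qed
  show "\<And>x y. 0 < x \<Longrightarrow> x \<le> y \<Longrightarrow> y \<le> 1 \<Longrightarrow> F x \<ge> integral {x..y} (\<lambda>u. 1 / f u)"
    using split Feq gnn unfolding g_def by (smt (verit))
  show "\<And>x y. 0 < x \<Longrightarrow> x \<le> y \<Longrightarrow> y \<le> 1 \<Longrightarrow> F x \<ge> F y"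
    using split gnn unfolding g_def by (smt (verit))
  show "\<And>a. 0 < a \<Longrightarrow> a \<le> 1 \<Longrightarrow> continuous_on {a..1} F"
  proof -
    fix a :: real assume a: "0 < a" "a \<le> 1"
    have "continuous_on {a..1} (\<lambda>x. integral {x..1} g)"
      by (rule indefinite_integral_continuous_1'[OF gi[OF a(1)]])
    thus "continuous_on {a..1} F"
      by (rule continuous_on_eq) (use Feq a in \<open>auto simp: g_def\<close>)
  qed
qed

lemma rv_ev:
  fixes f :: "real \<Rightarrow> real"
  assumes "((\<lambda>x. f (l * x) / f x) \<longlongrightarrow> c) (at_right 0)" "c < M" "\<forall>x>0. f x > 0"
  shows "\<exists>d>0. \<forall>x. 0 < x \<longrightarrow> x < d \<longrightarrow> f (l * x) \<le> M * f x"
proof -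
  have "eventually (\<lambda>x. f (l * x) / f x < M) (at_right 0)"
    using order_tendstoD(2)[OF assms(1,2)] .
  then obtain d where d: "d > 0" "\<forall>x>0. x < d \<longrightarrow> f (l * x) / f x < M"
    unfolding eventually_at_right_field by auto
  show ?thesis
  proof (intro exI[of _ d] conjI allI impI)
    fix x :: real assume x: "0 < x" "x < d"
    have "f x > 0" using assms(3) x by auto
    thus "f (l * x) \<le> M * f x" using d(2) x by (auto simp: divide_simps)
  qed (use d in auto)
qed

lemma fphi_ev:
  fixes f \<phi> :: "real \<Rightarrow> real"
  assumes "((\<lambda>x. f x / \<phi> x) \<longlongrightarrow> 1) (at_right 0)" "\<forall>x>0. \<phi> x > 0"
  shows "\<exists>d>0. \<forall>x. 0 < x \<longrightarrow> x < d \<longrightarrow> \<phi> x \<le> 2 * f x \<and> f x \<le> 2 * \<phi> x"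
proof -
  have "eventually (\<lambda>x. dist (f x / \<phi> x) 1 < 1/2) (at_right 0)"
    using assms(1) unfolding tendsto_iff by (metis divide_pos_pos zero_less_numeral zero_less_one)
  then obtain d where d: "d > 0" "\<forall>x>0. x < d \<longrightarrow> dist (f x / \<phi> x) 1 < 1/2"
    unfolding eventually_at_right_field by auto
  show ?thesis
  proof (intro exI[of _ d] conjI allI impI)
    fix x :: real assume x: "0 < x" "x < d"
    have p: "\<phi> x > 0" using assms(2) x by auto
    have "\<bar>f x / \<phi> x - 1\<bar> < 1/2" using d(2) x by (auto simp: dist_real_def)
    hence "f x / \<phi> x > 1/2" "f x / \<phi> x < 3/2" by linarith+
    hence "f x > \<phi> x / 2" "f x < 3/2 * \<phi> x" using p by (auto simp: field_simps)
    thus "\<phi> x \<le> 2 * f x" "f x \<le> 2 * \<phi> x" using p by auto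
  qed (use d in auto)
qed

theorem mainTheorem11:
  fixes f \<phi> \<gamma> :: "real \<Rightarrow> real" and \<beta> \<theta> :: real
  assumes f_cont: "continuous_on {0<..} f"
    and f_pos: "\<forall>x>0. f x > 0"
    and f_RV: "RV_zero \<beta> f"
    and \<beta>_gt: "\<beta> > 1"
  defines "F \<equiv> (\<lambda>x. LBINT u=x..1. 1 / f u)"
  assumes \<phi>_cont: "continuous_on {0<..} \<phi>"
    and \<phi>_pos: "\<forall>x>0. \<phi> x > 0"
    and \<phi>_mono: "strict_mono_on {0<..} \<phi>"
    and \<phi>_0: "(\<phi> \<longlongrightarrow> 0) (at_right 0)"
    and f_\<phi>: "((\<lambda>x. f x / \<phi> x) \<longlongrightarrow> 1) (at_right 0)"
    and \<theta>_pos: "\<theta> > 0"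
    and \<gamma>_cont: "continuous_on {0<..} \<gamma>"
    and \<gamma>_pos: "\<forall>t>0. \<gamma> t > 0"
    and \<gamma>_decr: "\<forall>s t. 0 < s \<longrightarrow> s < t \<longrightarrow> \<gamma> t < \<gamma> s"
    and \<gamma>_RV: "RV_inf (- \<theta>) \<gamma>"
    and \<gamma>_lim: "(\<gamma> \<longlongrightarrow> 0) at_top"
    and hyp: "((\<lambda>t. f (inv_into {0<..} F t) / \<gamma> t) \<longlongrightarrow> 0) at_top"
  shows "((\<lambda>t. inv_into {0<..} \<phi> (\<gamma> t) / (t * \<gamma> t)) \<longlongrightarrow> 0) at_top"
proof -
  have Fd: "F = (\<lambda>x::real. LBINT u=x..1. 1 / f u)" by (simp add: F_def)
  note FF = F_facts[OF f_cont f_pos Fd]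
  note Feq = FF(1) and Fneg = FF(2) and Fge = FF(4) and Fmono = FF(5) and Fcont = FF(6)
  have fpos: "\<And>x. x > 0 \<Longrightarrow> f x > 0" using f_pos by auto
  have ppos: "\<And>x. x > 0 \<Longrightarrow> \<phi> x > 0" using \<phi>_pos by auto
  have pmono: "\<And>x y. 0 < x \<Longrightarrow> x \<le> y \<Longrightarrow> \<phi> x \<le> \<phi> y"
    using \<phi>_mono by (metis greaterThan_iff le_less less_le_trans strict_mono_onD)
  have gpos: "\<And>t. t > 0 \<Longrightarrow> \<gamma> t > 0" using \<gamma>_pos by auto
  have RV: "\<And>l. l > 0 \<Longrightarrow> ((\<lambda>x. f (l * x) / f x) \<longlongrightarrow> l powr \<beta>) (at_right 0)"
    using f_RV unfolding RV_zero_def by auto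
  obtain d1 where d1: "d1 > 0" "\<And>x. 0 < x \<Longrightarrow> x < d1 \<Longrightarrow> \<phi> x \<le> 2 * f x \<and> f x \<le> 2 * \<phi> x"
    using fphi_ev[OF f_\<phi> \<phi>_pos] by blast
  obtain d2 where d2: "d2 > 0" "\<And>x. 0 < x \<Longrightarrow> x < d2 \<Longrightarrow> f (2 * x) \<le> (2 powr \<beta> + 1) * f x"
    using rv_ev[OF RV[of 2], of "2 powr \<beta> + 1"] f_pos by auto
  define q where "q = (2 powr (-\<beta>) + 1/2) / 2"
  have "2 powr (-\<beta>) < 2 powr (-1::real)" by (rule powr_less_mono) (use \<beta>_gt in auto)
  moreover have "2 powr (-1::real) = 1/2" by (simp add: powr_minus)
  ultimately have h2: "2 powr (-\<beta>) < 1/2" by simp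
  have q12: "q < 1/2" using h2 unfolding q_def by (simp add: field_simps)
  have "2 powr (-\<beta>) < q" using h2 unfolding q_def by (simp add: field_simps)
  have "(1/2::real) powr \<beta> = 2 powr (-\<beta>)" by (simp add: powr_divide powr_minus_divide)
  hence hq: "(1/2::real) powr \<beta> < q" using \<open>2 powr (-\<beta>) < q\<close> by simp
  obtain d3 where d3: "d3 > 0" "\<And>x. 0 < x \<Longrightarrow> x < d3 \<Longrightarrow> f ((1/2) * x) \<le> q * f x"
    using rv_ev[OF RV[of "1/2"] hq f_pos] by force
  have qpos: "q > 0" unfolding q_def by (auto intro: add_pos_pos)
  define K where "K = 4 * (2 powr \<beta> + 1)"
  have Kpos: "K > 0" unfolding K_def by (simp add: add_pos_pos)
  have boundA: "F x \<ge> x / (K * f x)" if x: "0 < x" "2 * x < d1" "x < d2" "2 * x \<le> 1" for x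
  proof -
    have fx: "f x > 0" using fpos x by auto
    have "(2 * x - x) / (K * f x) \<le> integral {x..2 * x} (\<lambda>u. 1 / f u)"
    proof (rule int_lb[OF f_cont f_pos])
      show "\<forall>v\<in>{x..2 * x}. f v \<le> K * f x"
      proof
        fix v assume v: "v \<in> {x..2 * x}"
        have "f v \<le> 2 * \<phi> v" using d1(2)[of v] v x by auto
        also have "\<phi> v \<le> \<phi> (2 * x)" using pmono[of v "2 * x"] v x by auto
        also have "\<phi> (2 * x) \<le> 2 * f (2 * x)" using d1(2)[of "2 * x"] x by auto
        also have "f (2 * x) \<le> (2 powr \<beta> + 1) * f x" using d2(2)[of x] x by auto
        finally show "f v \<le> K * f x" unfolding K_def by (simp add: algebra_simps)
      qed
    qed (use x fx Kpos in auto)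
    moreover have "integral {x..2 * x} (\<lambda>u. 1 / f u) \<le> F x" using Fge[of x "2 * x"] x by auto
    ultimately show ?thesis by simp
  qed
  define a where "a = min (d1/4) (min (d2/2) (min (d3/2) (1/4)))"
  have apos: "a > 0" unfolding a_def using d1 d2 d3 by auto
  define \<rho> where "\<rho> = 1 / (2 * q)"
  have rho1: "\<rho> > 1" unfolding \<rho>_def using q12 qpos by (simp add: field_simps)
  have rk: "(a / 2^k) / f (a / 2^k) \<ge> \<rho>^k * (a / f a)" for k :: nat
  proof (induction k)
    case 0 thus ?case by simp
  next
    case (Suc k)
    define s where "s = a / 2^k"
    have s: "s > 0" "s \<le> a" unfolding s_def using apos by (auto simp: divide_le_eq one_le_power)
    have s3: "s < d3" using s a_def d3 by auto
    have fs: "f s > 0" "f ((1/2) * s) > 0" using fpos s by auto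
    have le: "f ((1/2) * s) \<le> q * f s" using d3(2)[OF s(1) s3] .
    have "\<rho>^(Suc k) * (a / f a) = \<rho> * (\<rho>^k * (a / f a))" by simp
    also have "\<dots> \<le> \<rho> * (s / f s)" using mult_left_mono[OF Suc.IH, of \<rho>] rho1 unfolding s_def by simp
    also have "\<rho> * (s / f s) = ((1/2) * s) / (q * f s)" unfolding \<rho>_def by simp
    also have "\<dots> \<le> ((1/2) * s) / f ((1/2) * s)"
      using le fs s by (intro divide_left_mono) (auto intro: mult_pos_pos)
    also have "(1/2) * s = a / 2^(Suc k)" unfolding s_def by simp
    finally show ?case .
  qed
  have Fbig: "\<exists>s::real. (0::real) < s \<and> s \<le> (1::real) \<and> F s \<ge> t" for t
  proof -
    have "f a > 0" using fpos apos by auto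
    hence ra: "a / f a > 0" using apos by simp
    obtain k where k: "t * K / (a / f a) < \<rho>^k" using real_arch_pow[OF rho1] by blast
    define s where "s = a / 2^k"
    have s: "s > 0" "s \<le> a" unfolding s_def using apos by (auto simp: divide_le_eq one_le_power)
    have fs: "f s > 0" using fpos s by auto
    have "t * K < \<rho>^k * (a / f a)" using k pos_divide_less_eq[OF ra] by blast
    also have "\<dots> \<le> s / f s" using rk[of k] unfolding s_def .
    finally have "t < (s / f s) / K" using pos_less_divide_eq[OF Kpos] by blast
    also have "(s / f s) / K = s / (K * f s)" by simp
    also have "\<dots> \<le> F s" using boundA[of s] s a_def by auto
    finally show ?thesis using s a_def by (intro exI[of _ s]) auto
  qed
  have F1: "F (ereal 1) = 0" using Feq[of 1] by simp
  have Fsurj: "\<exists>x::real. (0::real) < x \<and> x \<le> (1::real) \<and> F x = t" if t: "t \<ge> 0" for t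
  proof -
    obtain s :: real where s: "0 < s" "s \<le> 1" "F s \<ge> t" using Fbig[of t] by blast
    obtain x :: real where "x \<ge> s" "x \<le> 1" "F x = t"
      using IVT2'[of "\<lambda>x::real. F x" 1 t s] F1 t s Fcont[OF s(1,2)] by auto
    thus ?thesis using s by (intro exI[of _ x]) auto
  qed
  define X where "X t = inv_into {0<..} (\<lambda>x::real. F x) t" for t
  have Xprop: "X t > 0 \<and> X t \<le> 1 \<and> F (X t) = t" if t: "t > 0" for t
  proof -
    obtain x :: real where x: "0 < x" "x \<le> 1" "F x = t" using Fsurj[of t] t by (meson less_imp_le)
    hence tin: "t \<in> (\<lambda>x::real. F x) ` {0<..}" by (intro image_eqI[of _ _ x]) auto
    have "X t \<in> {0<..}" unfolding X_def by (rule inv_into_into[OF tin])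
    moreover have FX: "F (X t) = t" unfolding X_def by (rule f_inv_into_f[OF tin])
    moreover have "X t \<le> 1"
    proof (rule ccontr)
      assume "\<not> X t \<le> 1" hence "F (X t) \<le> 0" using Fneg by auto
      thus False using FX t by simp
    qed
    ultimately show ?thesis by auto
  qed
  have X0: "eventually (\<lambda>t. X t < e) at_top" if e: "0 < e" "e \<le> 1" for e
  proof -
    have "eventually (\<lambda>t. t > max 0 (F e)) at_top" by (rule eventually_gt_at_top)
    thus ?thesis
    proof (rule eventually_mono)
      fix t assume t: "t > max 0 (F e)"
      show "X t < e"
      proof (rule ccontr)
        assume "\<not> X t < e"
        hence "F (X t) \<le> F e" using Fmono[of e "X t"] Xprop[of t] t e by auto
        thus False using Xprop[of t] t by auto
      qed
    qed
  qed
  have psurj: "\<exists>x>0. \<phi> x = y" if y: "0 < y" "y < \<phi> 1" for y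
  proof -
    have "eventually (\<lambda>x. \<phi> x < y) (at_right 0)" using order_tendstoD(2)[OF \<phi>_0 y(1)] .
    then obtain b where b: "b > 0" "\<forall>x>0. x < b \<longrightarrow> \<phi> x < y"
      unfolding eventually_at_right_field by auto
    define x0 where "x0 = min (b/2) (1/2)"
    have x0: "0 < x0" "x0 < b" "x0 \<le> 1" unfolding x0_def using b by auto
    have "\<phi> x0 < y" using b x0 by auto
    have "continuous_on {x0..1} \<phi>" using x0 by (intro continuous_on_subset[OF \<phi>_cont]) auto
    then obtain x where "x \<ge> x0" "x \<le> 1" "\<phi> x = y"
      using IVT'[of \<phi> x0 y 1] b x0 y less_imp_le by (metis less_imp_le order.strict_implies_order)
    thus ?thesis using x0 by (intro exI[of _ x]) auto
  qed
  define U where "U t = inv_into {0<..} \<phi> (\<gamma> t)" for t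
  have "\<phi> 1 > 0" using ppos by auto
  have evU: "eventually (\<lambda>t. t > 0 \<and> U t > 0 \<and> \<phi> (U t) = \<gamma> t) at_top"
  proof -
    have "eventually (\<lambda>t. \<gamma> t < \<phi> 1) at_top" using order_tendstoD(2)[OF \<gamma>_lim \<open>\<phi> 1 > 0\<close>] .
    moreover have "eventually (\<lambda>t::real. t > 0) at_top" by (rule eventually_gt_at_top)
    ultimately show ?thesis
    proof eventually_elim
      case (elim t)
      hence tin: "\<gamma> t \<in> \<phi> ` {0<..}" using psurj[of "\<gamma> t"] gpos[of t] by force
      show ?case using inv_into_into[OF tin] f_inv_into_f[OF tin] elim unfolding U_def by auto
    qed
  qed
  have U0: "eventually (\<lambda>t. U t < e) at_top" if e: "0 < e" for e
  proof -
    have "eventually (\<lambda>t. \<gamma> t < \<phi> e) at_top" using order_tendstoD(2)[OF \<gamma>_lim ppos[OF e]] .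
    with evU show ?thesis
    proof eventually_elim
      case (elim t)
      show ?case
      proof (rule ccontr)
        assume "\<not> U t < e" hence "\<phi> e \<le> \<phi> (U t)" using pmono[of e "U t"] e by auto
        thus False using elim by auto
      qed
    qed
  qed
  show ?thesis
    unfolding tendsto_iff
  proof (intro allI impI)
    fix \<epsilon> :: real assume eps: "\<epsilon> > 0"
    have lim: "((\<lambda>l::real. l powr (1 - \<beta>)) \<longlongrightarrow> 0) at_top"
      by (rule tendsto_neg_powr) (use \<beta>_gt in \<open>auto simp: filterlim_ident\<close>)
    have "eventually (\<lambda>l::real. 16 * l powr (1 - \<beta>) < \<epsilon>/2 \<and> l \<ge> 2) at_top"
    proof -
      have "eventually (\<lambda>l::real. l powr (1 - \<beta>) < \<epsilon>/32) at_top"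
        using order_tendstoD(2)[OF lim, of "\<epsilon>/32"] eps by simp
      moreover have "eventually (\<lambda>l::real. l \<ge> 2) at_top" by (rule eventually_ge_at_top)
      ultimately show ?thesis by eventually_elim auto
    qed
    then obtain N :: real where "\<forall>l\<ge>N. 16 * l powr (1 - \<beta>) < \<epsilon>/2 \<and> l \<ge> 2"
      unfolding eventually_at_top_linorder by blast
    then obtain L :: real where lam: "16 * L powr (1 - \<beta>) < \<epsilon>/2" "L \<ge> 2" by blast
    define \<mu> where "\<mu> = L powr (-\<beta>)"
    have mupos: "\<mu> > 0" unfolding \<mu>_def using lam by simp
    have lammu: "L * \<mu> = L powr (1 - \<beta>)"
      unfolding \<mu>_def using lam by (simp add: powr_diff powr_minus_divide)
    have "(1/L) powr \<beta> = \<mu>" unfolding \<mu>_def using lam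
      by (simp add: powr_divide powr_minus_divide)
    hence hm: "(1/L) powr \<beta> < 2 * \<mu>" using mupos by simp
    have "1/L > 0" using lam by simp
    from rv_ev[OF RV[OF this] hm f_pos]
    obtain d4 where d4: "d4 > 0" "\<And>x. 0 < x \<Longrightarrow> x < d4 \<Longrightarrow> f ((1/L) * x) \<le> 2 * \<mu> * f x"
      by force
    define e0 where "e0 = min (d1/2) (min d2 (1/2))"
    have e0: "0 < e0" "e0 \<le> 1" unfolding e0_def using d1 d2 by auto
    define e1 where "e1 = min d1 (min d4 1)"
    have e1: "0 < e1" unfolding e1_def using d1 d4 by auto
    have hypev: "eventually (\<lambda>t. f (X t) / \<gamma> t < \<epsilon> / (2 * K * L)) at_top"
      using order_tendstoD(2)[OF hyp[folded X_def]] eps Kpos lam by simp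
    have evt: "eventually (\<lambda>t::real. t > 0) at_top" by (rule eventually_gt_at_top)
    from evt evU X0[OF e0] U0[OF e1] hypev
    have "eventually (\<lambda>t. dist (U t / (t * \<gamma> t)) 0 < \<epsilon>) at_top"
    proof eventually_elim
      case (elim t)
      define x where "x = X t"
      define u where "u = U t"
      define y where "y = \<gamma> t"
      have t: "t > 0" using elim by auto
      have x: "x > 0" "x \<le> 1" "F x = t" using Xprop[OF t] unfolding x_def by auto
      have xs: "x < e0" using elim unfolding x_def by auto
      have u: "u > 0" "\<phi> u = y" "u < e1" using elim unfolding u_def y_def by auto
      have y: "y > 0" unfolding y_def using gpos t by auto
      have fx: "f x > 0" using fpos x by auto
      have hx: "f x / y < \<epsilon> / (2 * K * L)" using elim unfolding x_def y_def by auto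
      have ty: "t * y > 0" using t y by simp
      have lpos: "L > 0" using lam by simp
      have A: "x / (K * f x) \<le> t" using boundA[of x] x xs e0_def by auto
      hence A': "x \<le> K * f x * t" using Kpos fx by (simp add: divide_le_eq mult.commute mult.left_commute)
      define w where "w = (1/L) * u"
      have w: "w > 0" "w \<le> u" unfolding w_def using u lam by (auto simp: field_simps)
      have main: "u \<le> 16 * L * \<mu> * y * t + L * x"
      proof (cases "w \<le> x")
        case True
        hence "u \<le> L * x" unfolding w_def using lpos by (simp add: field_simps)
        moreover have "16 * L * \<mu> * y * t \<ge> 0" using lpos mupos y t by simp
        ultimately show ?thesis by linarith
      next
        case False
        have ud1: "u < d1" "u < d4" "u < 1" using u(3) unfolding e1_def by auto
        have "(w - x) / (16 * \<mu> * y) \<le> integral {x..w} (\<lambda>u. 1 / f u)"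
        proof (rule int_lb[OF f_cont f_pos])
          show "\<forall>v\<in>{x..w}. f v \<le> 16 * \<mu> * y"
          proof
            fix v assume v: "v \<in> {x..w}"
            have v0: "v > 0" "v < d1" using v x w ud1 by auto
            have "f v \<le> 2 * \<phi> v" using d1(2)[OF v0] by auto
            also have "\<phi> v \<le> \<phi> w" using pmono[of v w] v v0 by auto
            also have "\<phi> w \<le> 2 * f w" using d1(2)[of w] w ud1 by auto
            also have "f w \<le> 2 * \<mu> * f u" using d4(2)[of u] u ud1 unfolding w_def by auto
            also have "f u \<le> 2 * \<phi> u" using d1(2)[of u] u ud1 by auto
            finally show "f v \<le> 16 * \<mu> * y" using u(2) mupos by simp
          qed
        qed (use x False mupos y in auto)
        also have "\<dots> \<le> F x" using Fge[of x w] x False w ud1 by auto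
        finally have "(w - x) / (16 * \<mu> * y) \<le> t" using x by simp
        hence "w - x \<le> 16 * \<mu> * y * t" using mupos y by (simp add: divide_le_eq mult.commute mult.left_commute)
        hence "L * (w - x) \<le> L * (16 * \<mu> * y * t)" using lpos by simp
        moreover have "L * w = u" unfolding w_def using lpos by simp
        ultimately show ?thesis by (simp add: algebra_simps)
      qed
      have "u / (t * y) \<le> (16 * L * \<mu> * y * t + L * x) / (t * y)"
        using main ty by (simp add: divide_right_mono)
      also have "\<dots> = 16 * (L * \<mu>) + L * x / (t * y)" using t y by (simp add: field_simps)
      also have "L * x / (t * y) \<le> L * (K * f x * t) / (t * y)"
        using A' lpos ty by (intro divide_right_mono mult_left_mono) auto
      also have "L * (K * f x * t) / (t * y) = L * K * (f x / y)" using t y by (simp add: field_simps)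
      also have "\<dots> < \<epsilon> / 2" using hx lpos Kpos by (simp add: field_simps)
      finally have "u / (t * y) < 16 * (L * \<mu>) + \<epsilon>/2" by simp
      hence "u / (t * y) < \<epsilon>" using lam lammu by simp
      moreover have "u / (t * y) > 0" using u ty by simp
      ultimately show ?case unfolding u_def y_def by (simp add: dist_real_def)
    qed
    thus "eventually (\<lambda>t. dist (inv_into {0<..} \<phi> (\<gamma> t) / (t * \<gamma> t)) 0 < \<epsilon>) at_top"
      by (simp add: U_def)
  qed
qed

end
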